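(* Let $I$ be a compact interval, $k\ge 2$ an integer, $u\in(0,1]$ and $\tau\in(0,1)$. If $\tau(1+\tau)^{k-2}\ge u$, then $\mathrm{Diff}_+^{1,\tau}(I)$ does not contain a $(k,u)$-nesting.
   Context: $\mathrm{Diff}_+^{1,\tau}(I)$ is the group of orientation-preserving $C^1$-diffeomorphisms of $I$ whose derivative is $\tau$-Hölder continuous. For an integer $k\ge2$ and $u\in(0,1]$, a finite set $S\subseteq\mathrm{Homeo}_+(I)$ is a $(k,u)$-nesting if there exist nonempty open intervals $J_1\supsetneq J_2\supsetneq\cdots\supsetneq J_k$ and an infinite sequence $(s_1,s_2,\ldots)$ of elements of $S$ such that, with $w_n=s_ns_{n-1}\cdots s_1$ for $n\ge0$ ($w_0$ the identity): (i) $\sum_{n\ge0}|w_nJ_1|^u<\infty$, where $|\cdot|$ is length; (ii) for each $i=2,\ldots,k$ and each $n\ge0$ there is $s\in S$ (possibly depending on $i,n$) with $sw_nJ_i\cap w_nJ_i=\varnothing$ and $sw_nJ_{i-1}=w_nJ_{i-1}$. *)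

theory Defs
  imports "HOL-Analysis.Analysis"
begin

text \<open>Orientation-preserving homeomorphisms of the compact interval I = [a,b],
  represented as real functions (only their values on I matter).\<close>
definition Homeo_plus :: "real \<Rightarrow> real \<Rightarrow> (real \<Rightarrow> real) set" where
  "Homeo_plus a b = {f. continuous_on {a..b} f \<and> bij_betw f {a..b} {a..b}
                        \<and> strict_mono_on {a..b} f}"

definition Diff_plus_1_tau :: "real \<Rightarrow> real \<Rightarrow> real \<Rightarrow> (real \<Rightarrow> real) set" where
  "Diff_plus_1_tau a b \<tau> = {f. f \<in> Homeo_plus a b \<and>
     (\<exists>f'. (\<forall>x\<in>{a..b}. (f has_real_derivative f' x) (at x within {a..b}) \<and> f' x > 0)
         \<and> continuous_on {a..b} f'
         \<and> (\<exists>C. \<forall>x\<in>{a..b}. \<forall>y\<in>{a..b}. \<bar>f' x - f' y\<bar> \<le> C * \<bar>x - y\<bar> powr \<tau>))}"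

definition ilen :: "real set \<Rightarrow> real" where
  "ilen A = Sup A - Inf A"

definition open_subint :: "real \<Rightarrow> real \<Rightarrow> real set \<Rightarrow> bool" where
  "open_subint a b J \<longleftrightarrow> (\<exists>c d. a \<le> c \<and> c < d \<and> d \<le> b \<and> J = {c<..<d})"

text \<open>Words: wrd s 0 = id and wrd s (n+1) = s n \<circ> wrd s n; so s 0, s 1, ...
  play the role of s_1, s_2, ... in the paper and wrd s n = w_n.\<close>
primrec wrd :: "(nat \<Rightarrow> real \<Rightarrow> real) \<Rightarrow> nat \<Rightarrow> real \<Rightarrow> real" where
  "wrd s 0 = id"
| "wrd s (Suc n) = s n \<circ> wrd s n"

text \<open>(k,u)-nesting; the intervals J_1,...,J_k are J 1, ..., J k.\<close>
definition is_nesting :: "real \<Rightarrow> real \<Rightarrow> nat \<Rightarrow> real \<Rightarrow> (real \<Rightarrow> real) set \<Rightarrow> bool" where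
  "is_nesting a b k u S \<longleftrightarrow> finite S \<and> S \<subseteq> Homeo_plus a b \<and>
     (\<exists>J :: nat \<Rightarrow> real set. \<exists>s :: nat \<Rightarrow> real \<Rightarrow> real.
        (\<forall>i\<in>{1..k}. open_subint a b (J i)) \<and>
        (\<forall>i\<in>{1..<k}. J (Suc i) \<subset> J i) \<and>
        (\<forall>n. s n \<in> S) \<and>
        summable (\<lambda>n. ilen (wrd s n ` J 1) powr u) \<and>
        (\<forall>i\<in>{2..k}. \<forall>n. \<exists>g\<in>S.
            g ` (wrd s n ` J i) \<inter> wrd s n ` J i = {} \<and>
            g ` (wrd s n ` J (i - 1)) = wrd s n ` J (i - 1)))"

end

theory Submission
  imports Defs
begin


lemma homeo_image:
  assumes f: "f \<in> Homeo_plus a b" and ac: "a \<le> c" and cd: "c < d" and db: "d \<le> b"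
  shows "f ` {c<..<d} = {f c<..<f d}"
proof
  have sm: "strict_mono_on {a..b} f" and co: "continuous_on {a..b} f"
    using f by (auto simp: Homeo_plus_def)
  show "f ` {c<..<d} \<subseteq> {f c<..<f d}"
  proof
    fix y assume "y \<in> f ` {c<..<d}"
    then obtain x where x: "c < x" "x < d" "y = f x" by auto
    show "y \<in> {f c<..<f d}" using x ac cd db sm unfolding strict_mono_on_def by auto
  qed
  show "{f c<..<f d} \<subseteq> f ` {c<..<d}"
  proof
    fix y assume y: "y \<in> {f c<..<f d}"
    have "continuous_on {c..d} f" by (rule continuous_on_subset[OF co]) (use ac db in auto)
    then obtain x where x: "c \<le> x" "x \<le> d" "f x = y" using IVT'[of f c y d] y cd by auto
    then have "x \<noteq> c" "x \<noteq> d" using y by auto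
    then show "y \<in> f ` {c<..<d}" using x by force
  qed
qed

lemma ilen_int: "c < d \<Longrightarrow> ilen {c<..<d} = d - c"
  unfolding ilen_def by simp

lemma homeo_comp:
  assumes "f \<in> Homeo_plus a b" "g \<in> Homeo_plus a b"
  shows "g \<circ> f \<in> Homeo_plus a b"
proof -
  have f: "continuous_on {a..b} f" "bij_betw f {a..b} {a..b}" "strict_mono_on {a..b} f"
   and g: "continuous_on {a..b} g" "bij_betw g {a..b} {a..b}" "strict_mono_on {a..b} g"
    using assms by (auto simp: Homeo_plus_def)
  have im: "f ` {a..b} = {a..b}" using f(2) by (simp add: bij_betw_def)
  have "continuous_on {a..b} (g \<circ> f)"
    by (rule continuous_on_compose[OF f(1)]) (simp add: im g(1))
  moreover have "bij_betw (g \<circ> f) {a..b} {a..b}" using f(2) g(2) by (rule bij_betw_trans)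
  moreover have "strict_mono_on {a..b} (g \<circ> f)"
    unfolding strict_mono_on_def
  proof (intro allI impI)
    fix r s assume rs: "r \<in> {a..b} \<and> s \<in> {a..b} \<and> r < s"
    then have "f r \<in> {a..b}" "f s \<in> {a..b}" "f r < f s" using im f(3) unfolding strict_mono_on_def by auto
    then show "(g \<circ> f) r < (g \<circ> f) s" using g(3) unfolding strict_mono_on_def by auto
  qed
  ultimately show ?thesis by (simp add: Homeo_plus_def)
qed

lemma homeo_id: "id \<in> Homeo_plus a b"
  by (auto simp: Homeo_plus_def strict_mono_on_def)

lemma homeo_maps: "f \<in> Homeo_plus a b \<Longrightarrow> x \<in> {a..b} \<Longrightarrow> f x \<in> {a..b}"
  by (auto simp: Homeo_plus_def bij_betw_def)

lemma homeo_mono: "f \<in> Homeo_plus a b \<Longrightarrow> x \<in> {a..b} \<Longrightarrow> y \<in> {a..b} \<Longrightarrow> x < y \<Longrightarrow> f x < f y"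
  by (auto simp: Homeo_plus_def strict_mono_on_def)

lemma homeo_mono_le: "f \<in> Homeo_plus a b \<Longrightarrow> x \<in> {a..b} \<Longrightarrow> y \<in> {a..b} \<Longrightarrow> x \<le> y \<Longrightarrow> f x \<le> f y"
  by (metis homeo_mono order_le_less)

definition goodD :: "real \<Rightarrow> real \<Rightarrow> real \<Rightarrow> real \<Rightarrow> real \<Rightarrow> (real \<Rightarrow> real) \<Rightarrow> (real \<Rightarrow> real) \<Rightarrow> bool" where
  "goodD a b \<tau> m C f f' \<longleftrightarrow> (\<forall>x\<in>{a..b}. (f has_real_derivative f' x) (at x within {a..b}) \<and> f' x \<ge> m)
     \<and> (\<forall>x\<in>{a..b}. \<forall>y\<in>{a..b}. \<bar>f' x - f' y\<bar> \<le> C * \<bar>x - y\<bar> powr \<tau>)"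

lemma goodD_mono: "goodD a b \<tau> m C f f' \<Longrightarrow> m' \<le> m \<Longrightarrow> C \<le> C' \<Longrightarrow> goodD a b \<tau> m' C' f f'"
  unfolding goodD_def
  by (smt (verit, best) mult_right_mono powr_ge_zero)

lemma single:
  assumes "f \<in> Diff_plus_1_tau a b \<tau>"
  shows "\<exists>m C f'. m > 0 \<and> C > 0 \<and> goodD a b \<tau> m C f f'"
proof -
  obtain f' C where d: "\<forall>x\<in>{a..b}. (f has_real_derivative f' x) (at x within {a..b}) \<and> f' x > 0"
    and c: "continuous_on {a..b} f'"
    and h: "\<forall>x\<in>{a..b}. \<forall>y\<in>{a..b}. \<bar>f' x - f' y\<bar> \<le> C * \<bar>x - y\<bar> powr \<tau>"
    using assms by (auto simp: Diff_plus_1_tau_def)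
  obtain m where m: "m > 0" "\<forall>x\<in>{a..b}. f' x \<ge> m"
  proof (cases "a \<le> b")
    case True
    then obtain x0 where "x0 \<in> {a..b}" "\<forall>y\<in>{a..b}. f' x0 \<le> f' y"
      using continuous_attains_inf[OF compact_Icc _ c] by auto
    then show ?thesis using that d by force
  next
    case False
    then show ?thesis using that[of 1] by auto
  qed
  have "goodD a b \<tau> m C f f'" using d m h by (auto simp: goodD_def)
  then have "goodD a b \<tau> m (max C 1) f f'" by (rule goodD_mono) auto
  then show ?thesis using m by (intro exI[of _ m] exI[of _ "max C 1"]) auto
qed

lemma uniform:
  assumes "finite S" "S \<subseteq> Diff_plus_1_tau a b \<tau>"
  shows "\<exists>m C. m > 0 \<and> C > 0 \<and> (\<forall>f\<in>S. \<exists>f'. goodD a b \<tau> m C f f')"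
  using assms
proof (induction S rule: finite_induct)
  case empty
  then show ?case by (intro exI[of _ 1]) auto
next
  case (insert f S)
  obtain m C where mC: "m > 0" "C > 0" "\<forall>g\<in>S. \<exists>g'. goodD a b \<tau> m C g g'"
    using insert by auto
  obtain m1 C1 f' where f: "m1 > 0" "C1 > 0" "goodD a b \<tau> m1 C1 f f'"
    using single insert by blast
  have "\<forall>g\<in>insert f S. \<exists>g'. goodD a b \<tau> (min m m1) (max C C1) g g'"
    using mC f goodD_mono by (metis insert_iff max.cobounded1 max.cobounded2 min.cobounded1 min.cobounded2)
  then show ?case using mC f by (intro exI[of _ "min m m1"] exI[of _ "max C C1"]) auto
qed

lemma mvt_D:
  assumes d: "\<forall>x\<in>{a..b}. (f has_real_derivative f' x) (at x within {a..b})"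
    and "a \<le> c" "c < d" "d \<le> b"
  shows "\<exists>z. c < z \<and> z < d \<and> f d - f c = (d - c) * f' z"
proof -
  have "continuous_on {a..b} f" using d by (intro DERIV_continuous_on) auto
  then have co: "continuous_on {c..d} f" by (rule continuous_on_subset) (use assms in auto)
  have dd: "(f has_real_derivative f' x) (at x)" if "c < x" "x < d" for x
  proof -
    have "(f has_real_derivative f' x) (at x within {a..b})" using d that assms by auto
    moreover have "at x within {a..b} = at x" using that assms by (intro at_within_Icc_at) auto
    ultimately show ?thesis by simp
  qed
  obtain l z where z: "c < z" "z < d" "DERIV f z :> l" "f d - f c = (d - c) * l"
    using MVT[OF \<open>c < d\<close> co] dd real_differentiable_def by blast
  have "l = f' z" using DERIV_unique[OF z(3) dd[OF z(1,2)]] .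
  then show ?thesis using z by auto
qed



lemma ln_diff_bound:
  fixes x y m :: real
  assumes "m > 0" "x \<ge> m" "y \<ge> m"
  shows "ln x - ln y \<ge> - (\<bar>x - y\<bar> / m)"
proof (cases "x \<ge> y")
  case True
  then have "ln x \<ge> ln y" using assms by simp
  moreover have "\<bar>x - y\<bar> / m \<ge> 0" using assms by simp
  ultimately show ?thesis by linarith
next
  case False
  have xp: "x > 0" "y > 0" using assms by linarith+
  have "ln y - ln x = ln (y / x)" using xp by (simp add: ln_div)
  also have "... \<le> y / x - 1" using xp by (intro ln_le_minus_one) simp
  also have "... = (y - x) / x" using xp by (simp add: field_simps)
  also have "... \<le> (y - x) / m" using False assms by (intro divide_left_mono) auto
  finally show ?thesis using False by simp
qed

lemma displace:
  assumes g: "goodD a b \<tau> m C g g'" and C: "C \<ge> 0" and tau: "0 < \<tau>"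
    and "a \<le> c" "c < d" "d \<le> b" "g c = c" "g d = d" "c \<le> x" "x \<le> d"
  shows "\<bar>g x - x\<bar> \<le> C * (d - c) powr (1 + \<tau>)"
proof -
  have der: "\<forall>x\<in>{a..b}. (g has_real_derivative g' x) (at x within {a..b})"
    and h: "\<forall>x\<in>{a..b}. \<forall>y\<in>{a..b}. \<bar>g' x - g' y\<bar> \<le> C * \<bar>x - y\<bar> powr \<tau>"
    using g by (auto simp: goodD_def)
  obtain z where z: "c < z" "z < d" "g d - g c = (d - c) * g' z"
    using mvt_D[OF der] assms by blast
  have gz: "g' z = 1" using z assms by simp
  have pos: "0 \<le> C * (d - c) powr (1 + \<tau>)" using C by simp
  show ?thesis
  proof (cases "x = c")
    case True then show ?thesis using assms pos by simp
  next
    case False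
    then have cx: "c < x" using assms by simp
    obtain w where w: "c < w" "w < x" "g x - g c = (x - c) * g' w"
      using mvt_D[OF der, of c x] assms cx by auto
    have "g x - x = (x - c) * (g' w - g' z)" using w gz assms by (simp add: algebra_simps)
    then have "\<bar>g x - x\<bar> = (x - c) * \<bar>g' w - g' z\<bar>" using cx by (simp add: abs_mult)
    also have "... \<le> (d - c) * (C * (d - c) powr \<tau>)"
    proof (rule mult_mono)
      show "x - c \<le> d - c" using assms by simp
      have "w \<in> {a..b}" "z \<in> {a..b}" using w z assms by auto
      then have "\<bar>g' w - g' z\<bar> \<le> C * \<bar>w - z\<bar> powr \<tau>" using h by blast
      also have "... \<le> C * (d - c) powr \<tau>"
        using C w z assms cx tau by (intro mult_left_mono powr_mono2) auto
      finally show "\<bar>g' w - g' z\<bar> \<le> C * (d - c) powr \<tau>" .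
    qed (use C cx assms in auto)
    also have "... = C * (d - c) powr (1 + \<tau>)" using assms by (simp add: powr_add)
    finally show ?thesis .
  qed
qed

lemma distort:
  assumes g: "goodD a b \<tau> m C s s'" and m: "m > 0" and C: "C \<ge> 0" and tau: "0 \<le> \<tau>"
    and "a \<le> c" "c \<le> c'" "c' < d'" "d' \<le> d" "d \<le> b"
  shows "ln (s d' - s c') - ln (s d - s c) \<ge> ln (d' - c') - ln (d - c) - (C / m) * (d - c) powr \<tau>"
proof -
  have der: "\<forall>x\<in>{a..b}. (s has_real_derivative s' x) (at x within {a..b})"
    and h: "\<forall>x\<in>{a..b}. \<forall>y\<in>{a..b}. \<bar>s' x - s' y\<bar> \<le> C * \<bar>x - y\<bar> powr \<tau>"
    and lb: "\<forall>x\<in>{a..b}. s' x \<ge> m"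
    using g by (auto simp: goodD_def)
  obtain \<xi> where xi: "c' < \<xi>" "\<xi> < d'" "s d' - s c' = (d' - c') * s' \<xi>"
    using mvt_D[OF der, of c' d'] assms by auto
  obtain \<eta> where eta: "c < \<eta>" "\<eta> < d" "s d - s c = (d - c) * s' \<eta>"
    using mvt_D[OF der, of c d] assms by auto
  have m1: "s' \<xi> \<ge> m" "s' \<eta> \<ge> m" using lb xi eta assms by auto
  have l1: "ln (s d' - s c') = ln (d' - c') + ln (s' \<xi>)"
    using xi m1 m assms by (simp add: ln_mult)
  have l2: "ln (s d - s c) = ln (d - c) + ln (s' \<eta>)"
    using eta m1 m assms by (simp add: ln_mult)
  have l3: "ln (s' \<xi>) - ln (s' \<eta>) \<ge> - (\<bar>s' \<xi> - s' \<eta>\<bar> / m)"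
    using ln_diff_bound m m1 by blast
  have "\<bar>s' \<xi> - s' \<eta>\<bar> \<le> C * \<bar>\<xi> - \<eta>\<bar> powr \<tau>" using h xi eta assms by auto
  also have "... \<le> C * (d - c) powr \<tau>"
    using C xi eta assms tau by (intro mult_left_mono powr_mono2) auto
  finally have "\<bar>s' \<xi> - s' \<eta>\<bar> / m \<le> C * (d - c) powr \<tau> / m"
    using m by (intro divide_right_mono) auto
  then have "\<bar>s' \<xi> - s' \<eta>\<bar> / m \<le> (C / m) * (d - c) powr \<tau>" by simp
  then show ?thesis using l1 l2 l3 by linarith
qed

lemma disj_int:
  fixes \<alpha> \<beta> \<gamma> \<delta> :: real
  assumes "\<alpha> < \<beta>" "\<gamma> < \<delta>" "{\<alpha><..<\<beta>} \<inter> {\<gamma><..<\<delta>} = {}"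
  shows "\<beta> \<le> \<gamma> \<or> \<delta> \<le> \<alpha>"
proof (rule ccontr)
  assume "\<not> ?thesis"
  then have "(max \<alpha> \<gamma> + min \<beta> \<delta>) / 2 \<in> {\<alpha><..<\<beta>} \<inter> {\<gamma><..<\<delta>}" using assms by auto
  then show False using assms by auto
qed



context
  fixes a b \<tau> m C :: real and S :: "(real \<Rightarrow> real) set" and s :: "nat \<Rightarrow> real \<Rightarrow> real"
  assumes Sh: "S \<subseteq> Homeo_plus a b" and ss: "\<And>n. s n \<in> S" and mpos: "m > 0" and Cpos: "C > 0"
    and gd: "\<And>f. f \<in> S \<Longrightarrow> \<exists>f'. goodD a b \<tau> m C f f'" and tau: "0 < \<tau>"
begin

lemma W_homeo: "wrd s n \<in> Homeo_plus a b"
proof (induction n)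
  case 0 then show ?case by (metis homeo_id wrd.simps(1))
next
  case (Suc n)
  have "s n \<in> Homeo_plus a b" using ss Sh by auto
  then show ?case using Suc homeo_comp by (metis wrd.simps(2))
qed

lemma W_img: "a \<le> c \<Longrightarrow> c < d \<Longrightarrow> d \<le> b \<Longrightarrow> wrd s n ` {c<..<d} = {wrd s n c<..<wrd s n d}"
  using homeo_image[OF W_homeo] by blast

lemma W_lt: "a \<le> c \<Longrightarrow> c < d \<Longrightarrow> d \<le> b \<Longrightarrow> wrd s n c < wrd s n d"
  using homeo_mono[OF W_homeo] by auto

lemma W_le: "a \<le> c \<Longrightarrow> c \<le> d \<Longrightarrow> d \<le> b \<Longrightarrow> wrd s n c \<le> wrd s n d"
  using homeo_mono_le[OF W_homeo] by auto

lemma W_in: "x \<in> {a..b} \<Longrightarrow> wrd s n x \<in> {a..b}"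
  using homeo_maps[OF W_homeo] by auto

lemma W_ilen: "a \<le> c \<Longrightarrow> c < d \<Longrightarrow> d \<le> b \<Longrightarrow> ilen (wrd s n ` {c<..<d}) = wrd s n d - wrd s n c"
  using W_img W_lt ilen_int by simp

lemma fix_bound:
  assumes g: "g \<in> S" and "a \<le> p" "p \<le> p'" "p' < q'" "q' \<le> q" "q \<le> b"
    and disj: "g ` {p'<..<q'} \<inter> {p'<..<q'} = {}" and inv: "g ` {p<..<q} = {p<..<q}"
  shows "q' - p' \<le> C * (q - p) powr (1 + \<tau>)"
proof -
  have gh: "g \<in> Homeo_plus a b" using g Sh by auto
  obtain g' where gg: "goodD a b \<tau> m C g g'" using gd g by auto
  have pq: "p < q" using assms by simp
  have e: "{g p<..<g q} = {p<..<q}" using inv homeo_image[OF gh, of p q] assms by simp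
  have lt: "g p < g q" using homeo_mono[OF gh] assms by auto
  have "Inf {g p<..<g q} = Inf {p<..<q}" "Sup {g p<..<g q} = Sup {p<..<q}" using e by simp_all
  then have gp: "g p = p" "g q = q" using lt pq by simp_all
  have "g ` {p'<..<q'} = {g p'<..<g q'}" using homeo_image[OF gh] assms by simp
  with disj have "{g p'<..<g q'} \<inter> {p'<..<q'} = {}" by simp
  moreover have "g p' < g q'" using homeo_mono[OF gh] assms by auto
  ultimately have "g q' \<le> p' \<or> q' \<le> g p'" using disj_int assms by blast
  then show ?thesis
  proof
    assume "g q' \<le> p'"
    then have "q' - p' \<le> \<bar>g q' - q'\<bar>" by simp
    also have "... \<le> C * (q - p) powr (1 + \<tau>)"
      by (rule displace[OF gg]) (use Cpos tau assms gp in auto)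
    finally show ?thesis .
  next
    assume "q' \<le> g p'"
    then have "q' - p' \<le> \<bar>g p' - p'\<bar>" by simp
    also have "... \<le> C * (q - p) powr (1 + \<tau>)"
      by (rule displace[OF gg]) (use Cpos tau assms gp in auto)
    finally show ?thesis .
  qed
qed

lemma len_bound:
  assumes "a \<le> c1" "c1 \<le> c2" "c2 < d2" "d2 \<le> d1" "d1 \<le> b"
    and cond: "\<forall>n. \<exists>g\<in>S. g ` (wrd s n ` {c2<..<d2}) \<inter> wrd s n ` {c2<..<d2} = {}
                  \<and> g ` (wrd s n ` {c1<..<d1}) = wrd s n ` {c1<..<d1}"
  shows "wrd s n d2 - wrd s n c2 \<le> C * (wrd s n d1 - wrd s n c1) powr (1 + \<tau>)"
proof -
  obtain g where g: "g \<in> S" "g ` (wrd s n ` {c2<..<d2}) \<inter> wrd s n ` {c2<..<d2} = {}"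
    "g ` (wrd s n ` {c1<..<d1}) = wrd s n ` {c1<..<d1}" using cond by blast
  have img: "wrd s n ` {c2<..<d2} = {wrd s n c2<..<wrd s n d2}"
    "wrd s n ` {c1<..<d1} = {wrd s n c1<..<wrd s n d1}" using W_img assms by auto
  have o: "a \<le> wrd s n c1" "wrd s n c1 \<le> wrd s n c2" "wrd s n c2 < wrd s n d2"
    "wrd s n d2 \<le> wrd s n d1" "wrd s n d1 \<le> b"
    using W_in[of c1 n] W_in[of d1 n] W_le[of c1 c2 n] W_le[of d2 d1 n] W_lt[of c2 d2 n] assms
    by auto
  show ?thesis
    by (rule fix_bound[OF g(1) o]) (use g(2,3) img in auto)
qed

lemma len_distort:
  assumes "a \<le> c1" "c1 \<le> c2" "c2 < d2" "d2 \<le> d1" "d1 \<le> b"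
    and sm: "summable (\<lambda>n. (wrd s n d1 - wrd s n c1) powr \<tau>)"
  shows "\<exists>c0>0. \<forall>n. wrd s n d2 - wrd s n c2 \<ge> c0 * (wrd s n d1 - wrd s n c1)"
proof -
  define L1 where "L1 n = wrd s n d1 - wrd s n c1" for n
  define L2 where "L2 n = wrd s n d2 - wrd s n c2" for n
  define \<rho> where "\<rho> n = ln (L2 n) - ln (L1 n)" for n
  define K where "K = C / m"
  have K0: "K \<ge> 0" using Cpos mpos by (simp add: K_def)
  have pos: "L1 n > 0" "L2 n > 0" for n
    using W_lt[of c1 d1 n] W_lt[of c2 d2 n] assms by (auto simp: L1_def L2_def)
  have step: "\<rho> (Suc n) \<ge> \<rho> n - K * L1 n powr \<tau>" for n
  proof -
    obtain s' where sg: "goodD a b \<tau> m C (s n) s'" using gd ss by blast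
    have o: "a \<le> wrd s n c1" "wrd s n c1 \<le> wrd s n c2" "wrd s n c2 < wrd s n d2"
      "wrd s n d2 \<le> wrd s n d1" "wrd s n d1 \<le> b"
      using W_in[of c1 n] W_in[of d1 n] W_le[of c1 c2 n] W_le[of d2 d1 n] W_lt[of c2 d2 n] assms
      by auto
    from distort[OF sg mpos _ _ o] Cpos tau
    show ?thesis unfolding \<rho>_def L1_def L2_def K_def by simp
  qed
  have ind: "\<rho> n \<ge> \<rho> 0 - K * (\<Sum>j<n. L1 j powr \<tau>)" for n
  proof (induction n)
    case 0 then show ?case by simp
  next
    case (Suc n)
    then show ?case using step[of n] by (simp add: algebra_simps)
  qed
  define \<Sigma> where "\<Sigma> = suminf (\<lambda>n. L1 n powr \<tau>)"
  have sm': "summable (\<lambda>n. L1 n powr \<tau>)" using sm by (simp add: L1_def)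
  have "(\<Sum>j<n. L1 j powr \<tau>) \<le> \<Sigma>" for n
    unfolding \<Sigma>_def by (rule sum_le_suminf[OF sm']) auto
  then have rb: "\<rho> n \<ge> \<rho> 0 - K * \<Sigma>" for n
    using ind[of n] mult_left_mono[OF _ K0] by (smt (verit))
  show ?thesis
  proof (intro exI[of _ "exp (\<rho> 0 - K * \<Sigma>)"] conjI allI)
    fix n
    have "L2 n = exp (\<rho> n) * L1 n" using pos[of n]
      by (simp add: \<rho>_def exp_diff)
    also have "... \<ge> exp (\<rho> 0 - K * \<Sigma>) * L1 n" using rb[of n] pos[of n]
      by (intro mult_right_mono) auto
    finally show "wrd s n d2 - wrd s n c2 \<ge> exp (\<rho> 0 - K * \<Sigma>) * (wrd s n d1 - wrd s n c1)"
      by (simp add: L1_def L2_def)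
  qed simp
qed

end



theorem lemma3p4:
  fixes a b u \<tau> :: real and k :: nat
  assumes "k \<ge> 2" and "0 < u" and "u \<le> 1" and "0 < \<tau>" and "\<tau> < 1"
    and "\<tau> * (1 + \<tau>) ^ (k - 2) \<ge> u"
  shows "\<not> (\<exists>S. S \<subseteq> Diff_plus_1_tau a b \<tau> \<and> is_nesting a b k u S)"
proof
  assume "\<exists>S. S \<subseteq> Diff_plus_1_tau a b \<tau> \<and> is_nesting a b k u S"
  then obtain S where SD: "S \<subseteq> Diff_plus_1_tau a b \<tau>" and isn: "is_nesting a b k u S" by blast
  have fin: "finite S" and SH: "S \<subseteq> Homeo_plus a b" using isn unfolding is_nesting_def by simp_all
  have "\<exists>J s. (\<forall>i\<in>{1..k}. open_subint a b (J i)) \<and> (\<forall>i\<in>{1..<k}. J (Suc i) \<subset> J i) \<and>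
        (\<forall>n. s n \<in> S) \<and> summable (\<lambda>n. ilen (wrd s n ` J 1) powr u) \<and>
        (\<forall>i\<in>{2..k}. \<forall>n. \<exists>g\<in>S. g ` (wrd s n ` J i) \<inter> wrd s n ` J i = {} \<and>
            g ` (wrd s n ` J (i - 1)) = wrd s n ` J (i - 1))"
    using isn unfolding is_nesting_def by (elim conjE)
  then obtain J s where A: "(\<forall>i\<in>{1..k}. open_subint a b (J i)) \<and> (\<forall>i\<in>{1..<k}. J (Suc i) \<subset> J i) \<and>
        (\<forall>n. s n \<in> S) \<and> summable (\<lambda>n. ilen (wrd s n ` J 1) powr u) \<and>
        (\<forall>i\<in>{2..k}. \<forall>n. \<exists>g\<in>S. g ` (wrd s n ` J i) \<inter> wrd s n ` J i = {} \<and>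
            g ` (wrd s n ` J (i - 1)) = wrd s n ` J (i - 1))"
    by (elim exE)
  have Jo: "\<forall>i\<in>{1..k}. open_subint a b (J i)" using A by (rule conjunct1)
  have Jsub: "\<forall>i\<in>{1..<k}. J (Suc i) \<subset> J i" using A[THEN conjunct2] by (rule conjunct1)
  have ss: "\<forall>n. s n \<in> S" using A[THEN conjunct2, THEN conjunct2] by (rule conjunct1)
  have sm: "summable (\<lambda>n. ilen (wrd s n ` J 1) powr u)"
    using A[THEN conjunct2, THEN conjunct2, THEN conjunct2] by (rule conjunct1)
  have cond: "\<forall>i\<in>{2..k}. \<forall>n. \<exists>g\<in>S. g ` (wrd s n ` J i) \<inter> wrd s n ` J i = {} \<and>
            g ` (wrd s n ` J (i - 1)) = wrd s n ` J (i - 1)"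
    using A[THEN conjunct2, THEN conjunct2, THEN conjunct2] by (rule conjunct2)
  obtain m C where mC: "m > 0" "C > 0" "\<forall>f\<in>S. \<exists>f'. goodD a b \<tau> m C f f'"
    using uniform[OF fin SD] by blast
  have ss': "\<And>n. s n \<in> S" using ss by blast
  have gd': "\<And>f. f \<in> S \<Longrightarrow> \<exists>f'. goodD a b \<tau> m C f f'" using mC(3) by blast
  have tau: "0 < \<tau>" by fact
  note ctx = SH ss' mC(1) mC(2) gd' tau
  define cc where "cc i = Inf (J i)" for i
  define dd where "dd i = Sup (J i)" for i
  have J: "a \<le> cc i \<and> cc i < dd i \<and> dd i \<le> b \<and> J i = {cc i<..<dd i}" if iin: "i \<in> {1..k}" for i
  proof -
    obtain c d where "a \<le> c" "c < d" "d \<le> b" "J i = {c<..<d}"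
      using bspec[OF Jo iin] unfolding open_subint_def by blast
    then show ?thesis by (simp add: cc_def dd_def)
  qed
  define L where "L i n = wrd s n (dd i) - wrd s n (cc i)" for i n
  define ue where "ue i = u / (1 + \<tau>) ^ (i - 1)" for i
  have uepos: "ue i > 0" for i using assms by (simp add: ue_def)
  have Lil: "ilen (wrd s n ` J i) = L i n" if "i \<in> {1..k}" for i n
    using W_ilen[OF ctx, where c="cc i" and d="dd i" and n=n] J[OF that] by (simp add: L_def)
  have Lpos: "L i n > 0" if "i \<in> {1..k}" for i n
    using W_lt[OF ctx, where c="cc i" and d="dd i" and n=n] J[OF that] by (simp add: L_def)
  have Lle: "L i n \<le> b - a" if "i \<in> {1..k}" for i n
  proof -
    have "wrd s n (cc i) \<in> {a..b}" by (rule W_in[OF ctx]) (use J[OF that] in auto)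
    moreover have "wrd s n (dd i) \<in> {a..b}" by (rule W_in[OF ctx]) (use J[OF that] in auto)
    ultimately show ?thesis by (simp add: L_def)
  qed
  have nest: "cc i \<le> cc (Suc i) \<and> dd (Suc i) \<le> dd i" if "i \<in> {1..<k}" for i
  proof -
    have i1: "i \<in> {1..k}" "Suc i \<in> {1..k}" using that by auto
    have "J (Suc i) \<subseteq> J i" using Jsub that by auto
    then have "{cc (Suc i)<..<dd (Suc i)} \<subseteq> {cc i<..<dd i}" using J[OF i1(1)] J[OF i1(2)] by simp
    then show ?thesis using J[OF i1(2)] greaterThanLessThan_subseteq_greaterThanLessThan by blast
  qed
  have cnd: "\<forall>n. \<exists>g\<in>S. g ` (wrd s n ` {cc (Suc i)<..<dd (Suc i)}) \<inter> wrd s n ` {cc (Suc i)<..<dd (Suc i)} = {}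
                  \<and> g ` (wrd s n ` {cc i<..<dd i}) = wrd s n ` {cc i<..<dd i}" if "i \<in> {1..<k}" for i
  proof -
    have i1: "i \<in> {1..k}" "Suc i \<in> {1..k}" "Suc i \<in> {2..k}" using that by auto
    have c: "\<forall>n. \<exists>g\<in>S. g ` (wrd s n ` J (Suc i)) \<inter> wrd s n ` J (Suc i) = {} \<and>
            g ` (wrd s n ` J (Suc i - 1)) = wrd s n ` J (Suc i - 1)"
      using cond i1(3) by blast
    have e1: "J (Suc i) = {cc (Suc i)<..<dd (Suc i)}" using J[OF i1(2)] by blast
    have e2: "J i = {cc i<..<dd i}" using J[OF i1(1)] by blast
    from c show ?thesis unfolding e1 e2 diff_Suc_1 .
  qed
  have bnd: "L (Suc i) n \<le> C * L i n powr (1 + \<tau>)" if "i \<in> {1..<k}" for i n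
  proof -
    have i1: "i \<in> {1..k}" "Suc i \<in> {1..k}" using that by auto
    show ?thesis unfolding L_def
      by (rule len_bound[OF ctx _ _ _ _ _ cnd[OF that]]) (use J[OF i1(1)] J[OF i1(2)] nest[OF that] in auto)
  qed
  have main: "1 \<le> i \<longrightarrow> i \<le> k \<longrightarrow> summable (\<lambda>n. L i n powr ue i)" for i
  proof (induction i)
    case 0 show ?case by simp
  next
    case (Suc i)
    show ?case
    proof (cases "i = 0")
      case True
      have "1 \<in> {1..k}" using assms by auto
      then show ?thesis using sm Lil[of 1] True by (simp add: ue_def)
    next
      case False
      show ?thesis
      proof (intro impI)
        assume "Suc i \<le> k"
        then have i1: "i \<in> {1..k}" "Suc i \<in> {1..k}" "i \<in> {1..<k}" using False by auto
        have smi: "summable (\<lambda>n. L i n powr ue i)" using Suc.IH i1 by auto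
        have ue_eq: "(1 + \<tau>) * ue (Suc i) = ue i"
        proof -
          obtain j where "i = Suc j" using False by (cases i) auto
          then have "ue (Suc i) = (u / (1 + \<tau>) ^ j) / (1 + \<tau>)" "ue i = u / (1 + \<tau>) ^ j"
            by (simp_all add: ue_def mult.commute)
          moreover have "1 + \<tau> \<noteq> 0" using assms by simp
          ultimately show ?thesis by simp
        qed
        have le: "L (Suc i) n powr ue (Suc i) \<le> C powr ue (Suc i) * L i n powr ue i" for n
        proof -
          have "L (Suc i) n powr ue (Suc i) \<le> (C * L i n powr (1 + \<tau>)) powr ue (Suc i)"
            using bnd[OF i1(3), of n] Lpos[OF i1(2), of n] uepos[of "Suc i"]
            by (intro powr_mono2) auto
          also have "... = C powr ue (Suc i) * L i n powr ((1 + \<tau>) * ue (Suc i))"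
            using mC(2) Lpos[OF i1(1), of n] by (simp add: powr_mult powr_powr)
          finally show ?thesis using ue_eq by simp
        qed
        show "summable (\<lambda>n. L (Suc i) n powr ue (Suc i))"
          by (rule summable_comparison_test'[OF summable_mult[OF smi, of "C powr ue (Suc i)"]])
             (use le in auto)
      qed
    qed
  qed
  define i0 where "i0 = k - 1"
  have i0: "i0 \<in> {1..k}" "k \<in> {1..k}" "i0 \<in> {1..<k}" "Suc i0 = k" using assms by (auto simp: i0_def)
  have smi0: "summable (\<lambda>n. L i0 n powr ue i0)" using main[of i0] i0 by auto
  have ue_le: "ue i0 \<le> \<tau>"
  proof -
    have "i0 - 1 = k - 2" by (simp add: i0_def)
    moreover have "u / (1 + \<tau>) ^ (k - 2) \<le> \<tau>" using assms by (simp add: pos_divide_le_eq)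
    ultimately show ?thesis by (simp add: ue_def)
  qed
  have smtau: "summable (\<lambda>n. L i0 n powr \<tau>)"
  proof (rule summable_comparison_test'[OF summable_mult2[OF smi0, of "(b - a) powr (\<tau> - ue i0)"]])
    fix n
    have Lp: "L i0 n > 0" using Lpos[OF i0(1)] .
    have "L i0 n powr \<tau> = L i0 n powr ue i0 * L i0 n powr (\<tau> - ue i0)"
      by (simp add: powr_add[symmetric])
    also have "... \<le> L i0 n powr ue i0 * (b - a) powr (\<tau> - ue i0)"
      using Lp Lle[OF i0(1), of n] ue_le by (intro mult_left_mono powr_mono2) auto
    finally show "norm (L i0 n powr \<tau>) \<le> L i0 n powr ue i0 * (b - a) powr (\<tau> - ue i0)" by simp
  qed
  have nk: "cc i0 \<le> cc k" "dd k \<le> dd i0" using nest[OF i0(3)] i0(4) by auto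
  have J0: "a \<le> cc i0" "dd i0 \<le> b" using J[OF i0(1)] by auto
  have Jk: "cc k < dd k" using J[OF i0(2)] by auto
  have smL: "summable (\<lambda>n. (wrd s n (dd i0) - wrd s n (cc i0)) powr \<tau>)"
    using smtau unfolding L_def .
  have "\<exists>c0>0. \<forall>n. wrd s n (dd k) - wrd s n (cc k) \<ge> c0 * (wrd s n (dd i0) - wrd s n (cc i0))"
    by (rule len_distort[OF ctx J0(1) nk(1) Jk nk(2) J0(2) smL])
  then obtain c0 where c0: "c0 > 0" "\<forall>n. L k n \<ge> c0 * L i0 n"
    unfolding L_def by blast
  have lim: "(\<lambda>n. L i0 n powr \<tau>) \<longlonglongrightarrow> 0" using summable_LIMSEQ_zero[OF smtau] .
  have "\<forall>\<^sub>F n in sequentially. L i0 n powr \<tau> < c0 / C"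
    using order_tendstoD(2)[OF lim] c0 mC by auto
  then obtain n where n: "L i0 n powr \<tau> < c0 / C" by (auto simp: eventually_sequentially)
  have Lp: "L i0 n > 0" using Lpos[OF i0(1)] .
  have "c0 * L i0 n \<le> L k n" using c0 by auto
  also have "... \<le> C * L i0 n powr (1 + \<tau>)" using bnd[OF i0(3), of n] i0(4) by simp
  also have "... = (C * L i0 n powr \<tau>) * L i0 n" using Lp by (simp add: powr_add)
  also have "... < c0 * L i0 n" using n mC(2) Lp by (simp add: pos_less_divide_eq mult.commute)
  finally show False by simp
qed

end
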